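(* Let $a,b$ be non-negative integers and $c=1$ such that the polynomial $x^3-ax^2-bx-c$ has exactly one real root $\eta_1$, and $\eta_1>1$. Then there exists a real number $U$ such that for any positive integers $n,k$ with $k\ge 4$ and $n\ge U\eta_1^{3k/2}$, there is a positive integer sequence $\langle x_i\rangle_{i=1}^k$ satisfying $x_{i+3}=ax_{i+2}+bx_{i+1}+cx_i$ for $1\le i\le k-3$ and terminating at $x_k=n$.
   Context: A sequence $\langle x_i\rangle_{i=1}^k$ is positive if $x_1,x_2,x_3>0$. *)

theory Defs
  imports Complex_Main
begin

definition positive_seq :: "(nat \<Rightarrow> int) \<Rightarrow> bool" where
  "positive_seq x \<longleftrightarrow> x 1 > 0 \<and> x 2 > 0 \<and> x 3 > 0"

end

theory Submission imports Defs begin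

lemma core:
  fixes W :: "nat \<Rightarrow> real" and a b :: nat and \<eta> n U :: real and k :: nat
  assumes gt1: "\<eta> > 1" and root: "\<eta>^3 - a*\<eta>^2 - b*\<eta> - 1 = 0"
    and Dpos: "4*\<eta> - (b + 1/\<eta>)^2 > 0"
    and rec: "\<And>j. W (j+3) = W j - a * W (j+1) - b * W (j+2)"
    and W0: "W 0 = n" and npos: "n > 0"
    and y0a: "0 \<le> W 1 - W 0/\<eta>" and y0b: "W 1 - W 0/\<eta> < 1"
    and y1a: "0 \<le> W 2 - W 1/\<eta>" and y1b: "W 2 - W 1/\<eta> < 1"
    and U: "U = 8*(\<eta> + (1/\<eta> + (b + 1/\<eta>))^2)/(4*\<eta> - (b + 1/\<eta>)^2) * (1 + (b+1/\<eta>) + \<eta>) + 1"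
    and nbig: "n \<ge> U * \<eta> powr (3*k/2)"
    and jk: "j \<le> k"
  shows "W j > 0"
proof -
  define \<mu> where "\<mu> = 1/\<eta>"
  define s where "s = b + \<mu>"
  define D where "D = 4*\<eta> - s^2"
  define c where "c = \<mu> + s"
  define E where "E = 8*(\<eta> + c^2)/D"
  define K where "K = 1 + s + \<eta>"
  define y where "y j = W (j+1) - \<mu> * W j" for j
  define z where "z j = W (j+2) + s * W (j+1) + \<eta> * W j" for j
  define Q where "Q j = (y (j+1))^2 + s * y j * y (j+1) + \<eta> * (y j)^2" for j
  have D0: "D > 0" using Dpos by (simp add: D_def s_def \<mu>_def)
  have mu0: "\<mu> > 0" using gt1 by (simp add: \<mu>_def)
  have s0: "s > 0" using mu0 by (simp add: s_def)
  have mueta: "\<mu> * \<eta> = 1" using gt1 by (simp add: \<mu>_def)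
  have a_eq: "\<eta> - s*\<mu> = a"
  proof -
    have "\<eta>^3 - b*\<eta> - 1 = a*\<eta>^2" using root by simp
    then show ?thesis using gt1 unfolding s_def \<mu>_def
      by (simp add: field_simps power2_eq_square power3_eq_cube)
  qed
  have key: "W (j+3) + (s - \<mu>) * W (j+2) + (\<eta> - s*\<mu>) * W (j+1) - W j = 0" for j
    using rec[of j] a_eq by (simp add: s_def)
  have yrec: "y (j+2) = - s * y (j+1) - \<eta> * y j" for j
  proof -
    have "y (j+2) + s * y (j+1) + \<eta> * y j
        = W (j+3) + (s - \<mu>) * W (j+2) + (\<eta> - s*\<mu>) * W (j+1) - (\<mu>*\<eta>) * W j"
      unfolding y_def by (simp add: algebra_simps numeral_eq_Suc)
    also have "\<dots> = 0" using key[of j] mueta by simp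
    finally show ?thesis by linarith
  qed
  have Qrec: "Q (Suc j) = \<eta> * Q j" for j
  proof -
    have e: "y (Suc (Suc j)) = - s * y (Suc j) - \<eta> * y j" using yrec[of j] by simp
    show ?thesis unfolding Q_def Suc_eq_plus1[symmetric] add_2_eq_Suc' e
      by (simp add: algebra_simps power2_eq_square)
  qed
  have Qj: "Q j = \<eta>^j * Q 0" for j
    by (induction j) (simp_all add: Qrec)
  have zrec: "z (Suc j) = \<mu> * z j" for j
  proof -
    have "z (Suc j) - \<mu> * z j
        = W (j+3) + (s - \<mu>) * W (j+2) + (\<eta> - s*\<mu>) * W (j+1) - (\<mu>*\<eta>) * W j"
      unfolding z_def by (simp add: algebra_simps numeral_eq_Suc)
    also have "\<dots> = 0" using key[of j] mueta by simp
    finally show ?thesis by linarith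
  qed
  have zj: "z j * \<eta>^j = z 0" for j
  proof (induction j)
    case (Suc j)
    have "z (Suc j) * \<eta>^Suc j = (\<mu> * \<eta>) * (z j * \<eta>^j)" by (simp add: zrec algebra_simps)
    then show ?case using Suc mueta by simp
  qed simp
  have Wform: "W j * (\<mu>^2 + s*\<mu> + \<eta>) = z j - y (j+1) - c * y j" for j
    unfolding z_def y_def c_def by (simp add: algebra_simps power2_eq_square numeral_eq_Suc)
  have b1: "D * (y j)^2 \<le> 4 * Q j" for j
  proof -
    have "4 * Q j - D * (y j)^2 = (2 * y (j+1) + s * y j)^2"
      unfolding Q_def D_def by (simp add: algebra_simps power2_eq_square)
    then show ?thesis by (metis diff_ge_0_iff_ge zero_le_power2)
  qed
  have b2: "D * (y (j+1))^2 \<le> 4 * \<eta> * Q j" for j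
  proof -
    have "4 * \<eta> * Q j - D * (y (j+1))^2 = (2 * \<eta> * y j + s * y (j+1))^2"
      unfolding Q_def D_def by (simp add: algebra_simps power2_eq_square)
    then show ?thesis by (metis diff_ge_0_iff_ge zero_le_power2)
  qed
  have Rb: "(y (j+1) + c * y j)^2 \<le> E * Q j" for j
  proof -
    have "(y (j+1) + c * y j)^2 \<le> 2 * (y (j+1))^2 + 2 * c^2 * (y j)^2"
      using sum_squares_ge_zero[of "y (j+1) - c * y j" 0]
      by (simp add: algebra_simps power2_eq_square)
    also have "\<dots> = (2 * (D * (y (j+1))^2) + 2 * c^2 * (D * (y j)^2)) / D"
      using D0 by (simp add: field_simps)
    also have "\<dots> \<le> (2 * (4 * \<eta> * Q j) + 2 * c^2 * (4 * Q j)) / D"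
      using b1[of j] b2[of j] D0
      by (intro divide_right_mono add_mono mult_left_mono) auto
    also have "\<dots> = E * Q j" unfolding E_def by (simp add: field_simps)
    finally show ?thesis .
  qed
  have Q0pos: "Q 0 \<ge> 0" using b1[of 0] D0
    by (smt (verit) mult_nonneg_nonneg zero_le_power2)
  have y00: "0 \<le> y 0" "y 0 < 1" using y0a y0b by (simp_all add: y_def \<mu>_def)
  have y10: "0 \<le> y 1" "y 1 < 1" using y1a y1b by (simp_all add: y_def \<mu>_def numeral_2_eq_2)
  have Q0K: "Q 0 \<le> K"
  proof -
    have "(y 1)^2 \<le> 1" using y10 by (simp add: power_le_one)
    moreover have "y 0 * y 1 \<le> 1" using y00 y10 by (simp add: mult_le_one)
    moreover have "(y 0)^2 \<le> 1" using y00 by (simp add: power_le_one)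
    ultimately have "s * (y 0 * y 1) \<le> s" "\<eta> * (y 0)^2 \<le> \<eta>"
      using s0 gt1 by (simp_all add: mult_left_le)
    then show ?thesis unfolding Q_def K_def using \<open>(y 1)^2 \<le> 1\<close> by (simp add: mult.assoc)
  qed
  have E0: "E \<ge> 0" unfolding E_def using D0 gt1 by simp
  have K0: "K > 0" unfolding K_def using s0 gt1 by simp
  have UEK: "U = E * K + 1" unfolding U E_def K_def c_def s_def \<mu>_def D_def by simp
  have U1: "U \<ge> 1" using UEK E0 K0 by simp
  have W1p: "W 1 > 0" using y0a W0 npos gt1
    by (smt (verit) divide_pos_pos)
  have W2p: "W 2 > 0" using y1a W1p gt1
    by (smt (verit) divide_pos_pos)
  have z0n: "z 0 > n"
  proof -
    have "\<eta> * n > n" using gt1 npos by simp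
    moreover have "s * W 1 > 0" using s0 W1p by simp
    ultimately show ?thesis unfolding z_def using W0 W2p by (simp add: numeral_2_eq_2)
  qed
  have powr2: "(\<eta> powr (3*k/2))^2 = \<eta>^(3*k)"
  proof -
    have "(\<eta> powr (3*k/2))^2 = \<eta> powr (3*k/2 + 3*k/2)"
      by (simp only: power2_eq_square powr_add)
    also have "\<dots> = \<eta> powr (real (3*k))" by simp
    also have "\<dots> = \<eta>^(3*k)" using gt1 by (subst powr_realpow) auto
    finally show ?thesis .
  qed
  have n2: "n^2 \<ge> U^2 * \<eta>^(3*k)"
  proof -
    have "0 \<le> U * \<eta> powr (3*k/2)" using U1 by simp
    then have "(U * \<eta> powr (3*k/2))^2 \<le> n^2" using nbig by (simp add: power_mono)
    then show ?thesis by (simp only: power_mult_distrib powr2)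
  qed
  have "(z j)^2 * \<eta>^(2*j) = (z 0)^2" using zj[of j] by (metis power_mult_distrib power_mult power2_eq_square mult.commute)
  also have "\<dots> \<ge> n^2" using z0n npos by (simp add: power_strict_mono less_imp_le power_mono)
  finally have A: "(z j)^2 * \<eta>^(2*j) \<ge> U^2 * \<eta>^(3*j)"
  proof -
    assume h: "n^2 \<le> (z j)^2 * \<eta>^(2*j)"
    have "\<eta>^(3*j) \<le> \<eta>^(3*k)" using gt1 jk by (intro power_increasing) auto
    then have "U^2 * \<eta>^(3*j) \<le> U^2 * \<eta>^(3*k)" by (simp add: mult_left_mono)
    then show ?thesis using n2 h by linarith
  qed
  have e3: "\<eta>^(3*j) = \<eta>^(2*j) * \<eta>^j" by (simp flip: power_add)
  have B: "(z j)^2 \<ge> U^2 * \<eta>^j"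
  proof -
    have pos: "\<eta>^(2*j) > 0" using gt1 by simp
    have "(U^2 * \<eta>^j) * \<eta>^(2*j) \<le> (z j)^2 * \<eta>^(2*j)" using A e3 by (simp add: algebra_simps)
    then show ?thesis using pos by simp
  qed
  have "E * Q j = E * \<eta>^j * Q 0" using Qj[of j] by (metis mult.assoc)
  also have "\<dots> \<le> E * \<eta>^j * K"
  proof (rule mult_left_mono)
    show "0 \<le> E * \<eta>^j" using E0 gt1 by simp
  qed (rule Q0K)
  also have "\<dots> < U^2 * \<eta>^j"
  proof -
    have "U * 1 \<le> U * U" using U1 by (intro mult_left_mono) auto
    then have "E*K < U^2" using UEK by (simp add: power2_eq_square)
    then show ?thesis using gt1 by (simp add: algebra_simps)
  qed
  finally have "(y (j+1) + c * y j)^2 < (z j)^2" using Rb[of j] B by linarith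
  moreover have "z j > 0"
  proof -
    have "z j * \<eta>^j > 0" using zj[of j] z0n npos by simp
    then show ?thesis using gt1 by (simp add: zero_less_mult_iff)
  qed
  ultimately have "y (j+1) + c * y j < z j"
    by (meson power_less_imp_less_base less_imp_le)
  then have "W j * (\<mu>^2 + s*\<mu> + \<eta>) > 0" using Wform[of j] by simp
  moreover have "\<mu>^2 + s*\<mu> + \<eta> > 0" using mu0 s0 gt1 by (simp add: add_pos_pos)
  ultimately show ?thesis by (simp add: zero_less_mult_iff)
qed

lemma Dpos_lem:
  fixes a b :: nat and \<eta> :: real
  assumes gt1: "\<eta> > 1" and root: "\<eta>^3 - a*\<eta>^2 - b*\<eta> - 1 = 0"
    and uniq: "\<And>x::real. x^3 - a*x^2 - b*x - 1 = 0 \<Longrightarrow> x = \<eta>"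
  shows "4*\<eta> - (b + 1/\<eta>)^2 > 0"
proof (rule ccontr)
  assume neg: "\<not> 4*\<eta> - (b + 1/\<eta>)^2 > 0"
  define s where "s = b + 1/\<eta>"
  have a_eq: "\<eta> - s/\<eta> = a"
  proof -
    have "\<eta>^3 - b*\<eta> - 1 = a*\<eta>^2" using root by simp
    then show ?thesis using gt1 unfolding s_def
      by (simp add: field_simps power2_eq_square power3_eq_cube)
  qed
  have r_eq: "r = 1/\<eta>" if r: "r^2 + s*r + \<eta> = 0" for r
  proof -
    have "r^3 + b*r^2 + a*r - 1 = (r - 1/\<eta>) * (r^2 + s*r + \<eta>)"
      using gt1 unfolding a_eq[symmetric] s_def
      by (simp add: field_simps power2_eq_square power3_eq_cube)
    then have e: "r^3 + b*r^2 + a*r - 1 = 0" using r by simp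
    then have r0: "r \<noteq> 0" by auto
    have "(1/r)^3 - a*(1/r)^2 - b*(1/r) - 1 = - (r^3 + b*r^2 + a*r - 1) / r^3"
      using r0 by (simp add: field_simps power2_eq_square power3_eq_cube)
    then have "(1/r)^3 - a*(1/r)^2 - b*(1/r) - 1 = 0" using e by simp
    then have "1/r = \<eta>" by (rule uniq)
    then show ?thesis using r0 gt1 by (simp add: field_simps)
  qed
  define d where "d = sqrt (s^2 - 4*\<eta>)"
  have dd: "d^2 = s^2 - 4*\<eta>" unfolding d_def using neg by (simp add: s_def)
  have "((-s+d)/2)^2 + s*((-s+d)/2) + \<eta> = 0" using dd
    by (simp add: field_simps power2_eq_square)
  then have r1: "(-s+d)/2 = 1/\<eta>" by (rule r_eq)
  have "((-s-d)/2)^2 + s*((-s-d)/2) + \<eta> = 0" using dd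
    by (simp add: field_simps power2_eq_square)
  then have r2: "(-s-d)/2 = 1/\<eta>" by (rule r_eq)
  have "((-s+d)/2) * ((-s-d)/2) = \<eta>" using dd by (simp add: field_simps power2_eq_square)
  then have "(1/\<eta>) * (1/\<eta>) = \<eta>" using r1 r2 by simp
  then have "\<eta>^3 = 1" using gt1 by (simp add: field_simps power3_eq_cube)
  moreover have "\<eta>^3 > 1" using gt1 by (simp add: one_less_power)
  ultimately show False by simp
qed

fun wseq :: "nat \<Rightarrow> nat \<Rightarrow> int \<Rightarrow> int \<Rightarrow> int \<Rightarrow> nat \<Rightarrow> int" where
  "wseq a b n q p 0 = n"
| "wseq a b n q p (Suc 0) = q"
| "wseq a b n q p (Suc (Suc 0)) = p"
| "wseq a b n q p (Suc (Suc (Suc j))) = wseq a b n q p j - int a * wseq a b n q p (Suc j) - int b * wseq a b n q p (Suc (Suc j))"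

theorem theorem7:
  fixes a b c :: nat and \<eta> :: real
  assumes c1: "c = 1"
    and one_root: "{x::real. x^3 - real a * x^2 - real b * x - real c = 0} = {\<eta>}"
    and gt1: "\<eta> > 1"
  shows "\<exists>U::real. \<forall>n k :: nat. n > 0 \<longrightarrow> k \<ge> 4 \<longrightarrow>
           real n \<ge> U * \<eta> powr (3 * real k / 2) \<longrightarrow>
           (\<exists>x :: nat \<Rightarrow> int. positive_seq x \<and>
              (\<forall>i. 1 \<le> i \<and> i \<le> k - 3 \<longrightarrow>
                  x (i + 3) = int a * x (i + 2) + int b * x (i + 1) + int c * x i) \<and>
              x k = int n)"
proof -
  have root: "\<eta>^3 - a*\<eta>^2 - b*\<eta> - 1 = 0" using one_root c1 by auto
  have uniq: "\<And>x::real. x^3 - a*x^2 - b*x - 1 = 0 \<Longrightarrow> x = \<eta>" using one_root c1 by auto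
  have Dp: "4*\<eta> - (b + 1/\<eta>)^2 > 0" using Dpos_lem[OF gt1 root uniq] .
  define U where "U = 8*(\<eta> + (1/\<eta> + (b + 1/\<eta>))^2)/(4*\<eta> - (b + 1/\<eta>)^2) * (1 + (b+1/\<eta>) + \<eta>) + 1"
  show ?thesis
  proof (intro exI[of _ U] allI impI)
    fix n k :: nat
    assume npos: "n > 0" and k4: "k \<ge> 4" and nbig: "real n \<ge> U * \<eta> powr (3 * real k / 2)"
    define q where "q = \<lceil>real n / \<eta>\<rceil>"
    define p where "p = \<lceil>real_of_int q / \<eta>\<rceil>"
    define w where "w = wseq a b (int n) q p"
    define W where "W j = real_of_int (w j)" for j
    have rec: "W (j+3) = W j - a * W (j+1) - b * W (j+2)" for j
      unfolding W_def w_def by (simp add: numeral_3_eq_3 numeral_2_eq_2)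
    have W0: "W 0 = real n" unfolding W_def w_def by simp
    have W1: "W 1 = q" unfolding W_def w_def by simp
    have W2: "W 2 = p" unfolding W_def w_def by (simp add: numeral_2_eq_2)
    have y0a: "0 \<le> W 1 - W 0/\<eta>" "W 1 - W 0/\<eta> < 1"
      unfolding W0 W1 q_def by (simp_all add: ceiling_correct le_of_int_ceiling)
        (smt (verit) ceiling_correct)
    have y1a: "0 \<le> W 2 - W 1/\<eta>" "W 2 - W 1/\<eta> < 1"
      unfolding W2 W1 p_def by (simp_all add: ceiling_correct le_of_int_ceiling)
        (smt (verit) ceiling_correct)
    have nbig': "real n \<ge> U * \<eta> powr (real (3*k)/2)" using nbig by simp
    have pos: "W j > 0" if "j \<le> k" for j
      by (rule core[OF gt1 root Dp rec W0 _ y0a y1a U_def nbig' that])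
        (use npos in simp)
    define x where "x i = w (k - i)" for i
    have P1: "positive_seq x" unfolding positive_seq_def x_def
      using pos[of "k-1"] pos[of "k-2"] pos[of "k-3"] by (simp add: W_def)
    have P3: "x k = int n" unfolding x_def w_def by simp
    have P2: "x (i + 3) = int a * x (i + 2) + int b * x (i + 1) + int c * x i"
      if i: "1 \<le> i \<and> i \<le> k - 3" for i
    proof -
      define j where "j = k - i - 3"
      have ki: "k - i = Suc (Suc (Suc j))" "k - (i+3) = j" "k - (i+2) = Suc j" "k - (i+1) = Suc (Suc j)"
        using i k4 unfolding j_def by auto
      show ?thesis unfolding x_def ki c1 w_def by simp
    qed
    show "\<exists>x :: nat \<Rightarrow> int. positive_seq x \<and>
              (\<forall>i. 1 \<le> i \<and> i \<le> k - 3 \<longrightarrow>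
                  x (i + 3) = int a * x (i + 2) + int b * x (i + 1) + int c * x i) \<and>
              x k = int n"
      using P1 P2 P3 by blast
  qed
qed

end
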